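(* A topological space $(X,\tau)$ is a D-space if and only if for every continuous map $f:(X,\tau)\to(\mathcal P(X),\tau_{\mathcal S(X)})$ with $x\in f(x)$ for all $x\in X$, there exist a continuous neighborhood refinement map $f_*$ of $f$ and a closed discrete set $D\subseteq X$ such that the map $g:(X,\tau)\to(\mathcal P(D),\tau_{\mathcal S(D)})$, $g(x)=f_*(x)\cap D$, is continuous and satisfies $g^{-1}(\{\emptyset\})=\emptyset$.
   Context: For a set $A$ and $a\in A$, $\mathcal U_A(a)=\{B\subseteq A: a\in B\}$; the principal ultrafilter topology $\tau_{\mathcal S(A)}$ on $\mathcal P(A)$ is generated by the subbase $\{\mathcal U_A(a): a\in A\}$. A continuous neighborhood refinement map of $f$ is a continuous map $f_*:(X,\tau)\to(\mathcal P(X),\tau_{\mathcal S(X)})$ with $x\in f_*(x)\subseteq f(x)$ for all $x$. An open neighborhood assignment is $N:X\to\tau$ with $x\in N(x)$; $X$ is a D-space if every open neighborhood assignment $N$ admits a closed discrete $D\subseteq X$ with $\bigcup_{d\in D}N(d)=X$. *)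

theory Defs
  imports "HOL-Analysis.Analysis"
begin

definition U_set :: "'a set \<Rightarrow> 'a \<Rightarrow> 'a set set" where
  "U_set A a = {B. B \<subseteq> A \<and> a \<in> B}"

text \<open>Principal ultrafilter topology on the power set of A: generated by the subbase
  {U_A(a) | a in A}; the whole space Pow A is included so that the topological space
  is all of P(A) (including the empty set).\<close>
definition principal_ultrafilter_topology :: "'a set \<Rightarrow> 'a set topology" where
  "principal_ultrafilter_topology A =
     topology_generated_by (insert (Pow A) (U_set A ` A))"

definition closed_discrete :: "'a topology \<Rightarrow> 'a set \<Rightarrow> bool" where
  "closed_discrete X D \<longleftrightarrow> D \<subseteq> topspace X \<and> closedin X D \<and>
     (\<forall>d\<in>D. \<exists>U. openin X U \<and> U \<inter> D = {d})"

definition open_nbhd_assignment :: "'a topology \<Rightarrow> ('a \<Rightarrow> 'a set) \<Rightarrow> bool" where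
  "open_nbhd_assignment X N \<longleftrightarrow> (\<forall>x\<in>topspace X. openin X (N x) \<and> x \<in> N x)"

definition D_space :: "'a topology \<Rightarrow> bool" where
  "D_space X \<longleftrightarrow> (\<forall>N. open_nbhd_assignment X N \<longrightarrow>
     (\<exists>D. closed_discrete X D \<and> (\<Union>d\<in>D. N d) = topspace X))"

definition cont_nbhd_refinement :: "'a topology \<Rightarrow> ('a \<Rightarrow> 'a set) \<Rightarrow> ('a \<Rightarrow> 'a set) \<Rightarrow> bool" where
  "cont_nbhd_refinement X f fs \<longleftrightarrow>
     continuous_map X (principal_ultrafilter_topology (topspace X)) fs \<and>
     (\<forall>x\<in>topspace X. x \<in> fs x \<and> fs x \<subseteq> f x)"

end

theory Submission
  imports Defs
begin

lemma put_cont_iff: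
  "continuous_map X (principal_ultrafilter_topology A) f \<longleftrightarrow>
     (\<forall>x\<in>topspace X. f x \<subseteq> A) \<and> (\<forall>a\<in>A. openin X {x\<in>topspace X. a \<in> f x})"
proof -
  have U: "\<Union>(insert (Pow A) (U_set A ` A)) = Pow A"
    unfolding U_set_def by auto
  show ?thesis
  proof
    assume c: "continuous_map X (principal_ultrafilter_topology A) f"
    then have m: "\<forall>x\<in>topspace X. f x \<subseteq> A"
      unfolding principal_ultrafilter_topology_def continuous_on_generated_topo_iff U by auto
    moreover have "\<forall>a\<in>A. openin X {x\<in>topspace X. a \<in> f x}"
    proof
      fix a assume a: "a \<in> A"
      have "openin X (f -` U_set A a \<inter> topspace X)"
        using c a unfolding principal_ultrafilter_topology_def continuous_on_generated_topo_iff by auto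
      moreover have "f -` U_set A a \<inter> topspace X = {x\<in>topspace X. a \<in> f x}"
        using m unfolding U_set_def by auto
      ultimately show "openin X {x\<in>topspace X. a \<in> f x}" by simp
    qed
    ultimately show "(\<forall>x\<in>topspace X. f x \<subseteq> A) \<and> (\<forall>a\<in>A. openin X {x\<in>topspace X. a \<in> f x})" by blast
  next
    assume h: "(\<forall>x\<in>topspace X. f x \<subseteq> A) \<and> (\<forall>a\<in>A. openin X {x\<in>topspace X. a \<in> f x})"
    show "continuous_map X (principal_ultrafilter_topology A) f"
      unfolding principal_ultrafilter_topology_def
    proof (rule continuous_on_generated_topo)
      fix V assume "V \<in> insert (Pow A) (U_set A ` A)"
      then consider "V = Pow A" | a where "a \<in> A" "V = U_set A a" by auto
      then show "openin X (f -` V \<inter> topspace X)"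
      proof cases
        case 1
        then have "f -` V \<inter> topspace X = topspace X" using h by auto
        then show ?thesis by simp
      next
        case 2
        then have "f -` V \<inter> topspace X = {x\<in>topspace X. a \<in> f x}"
          using h unfolding U_set_def by auto
        then show ?thesis using h 2 by simp
      qed
    next
      show "f ` topspace X \<subseteq> \<Union>(insert (Pow A) (U_set A ` A))"
        using h U by auto
    qed
  qed
qed

theorem mainTheorem19:
  fixes X :: "'a topology"
  shows "D_space X \<longleftrightarrow>
    (\<forall>f. continuous_map X (principal_ultrafilter_topology (topspace X)) f \<and>
         (\<forall>x\<in>topspace X. x \<in> f x) \<longrightarrow>
       (\<exists>fs D. cont_nbhd_refinement X f fs \<and> closed_discrete X D \<and>
          continuous_map X (principal_ultrafilter_topology D) (\<lambda>x. fs x \<inter> D) \<and>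
          {x \<in> topspace X. fs x \<inter> D = {}} = {}))"
proof
  assume DS: "D_space X"
  show "\<forall>f. continuous_map X (principal_ultrafilter_topology (topspace X)) f \<and>
         (\<forall>x\<in>topspace X. x \<in> f x) \<longrightarrow>
       (\<exists>fs D. cont_nbhd_refinement X f fs \<and> closed_discrete X D \<and>
          continuous_map X (principal_ultrafilter_topology D) (\<lambda>x. fs x \<inter> D) \<and>
          {x \<in> topspace X. fs x \<inter> D = {}} = {})"
  proof (intro allI impI)
    fix f assume fa: "continuous_map X (principal_ultrafilter_topology (topspace X)) f \<and>
         (\<forall>x\<in>topspace X. x \<in> f x)"
    then have fc: "\<forall>x\<in>topspace X. f x \<subseteq> topspace X"
      and fo: "\<forall>a\<in>topspace X. openin X {x\<in>topspace X. a \<in> f x}"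
      and fx: "\<forall>x\<in>topspace X. x \<in> f x"
      using fa put_cont_iff[of X "topspace X" f] by simp_all
    define N where "N a = {x\<in>topspace X. a \<in> f x}" for a
    have "open_nbhd_assignment X N"
      unfolding open_nbhd_assignment_def N_def using fo fx by auto
    then obtain D where D: "closed_discrete X D" "(\<Union>d\<in>D. N d) = topspace X"
      using DS unfolding D_space_def by blast
    have DX: "D \<subseteq> topspace X" using D(1) unfolding closed_discrete_def by auto
    have "cont_nbhd_refinement X f f"
      unfolding cont_nbhd_refinement_def using fa by auto
    moreover have "continuous_map X (principal_ultrafilter_topology D) (\<lambda>x. f x \<inter> D)"
      unfolding put_cont_iff using fo DX by auto
    moreover have "{x \<in> topspace X. f x \<inter> D = {}} = {}"
      using D(2) unfolding N_def by blast
    ultimately show "\<exists>fs D. cont_nbhd_refinement X f fs \<and> closed_discrete X D \<and>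
          continuous_map X (principal_ultrafilter_topology D) (\<lambda>x. fs x \<inter> D) \<and>
          {x \<in> topspace X. fs x \<inter> D = {}} = {}"
      using D(1) by blast
  qed
next
  assume H: "\<forall>f. continuous_map X (principal_ultrafilter_topology (topspace X)) f \<and>
         (\<forall>x\<in>topspace X. x \<in> f x) \<longrightarrow>
       (\<exists>fs D. cont_nbhd_refinement X f fs \<and> closed_discrete X D \<and>
          continuous_map X (principal_ultrafilter_topology D) (\<lambda>x. fs x \<inter> D) \<and>
          {x \<in> topspace X. fs x \<inter> D = {}} = {})"
  show "D_space X"
    unfolding D_space_def
  proof (intro allI impI)
    fix N assume N: "open_nbhd_assignment X N"
    define f where "f x = {a\<in>topspace X. x \<in> N a}" for x
    have eq: "{x\<in>topspace X. a \<in> f x} = N a" if "a \<in> topspace X" for a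
      using N that unfolding f_def open_nbhd_assignment_def
      by (auto dest: openin_subset)
    have "continuous_map X (principal_ultrafilter_topology (topspace X)) f"
      unfolding put_cont_iff
    proof (intro conjI ballI)
      fix x assume "x \<in> topspace X" show "f x \<subseteq> topspace X" unfolding f_def by blast
    next
      fix a assume a: "a \<in> topspace X"
      show "openin X {x\<in>topspace X. a \<in> f x}" using eq[OF a] N a
        unfolding open_nbhd_assignment_def by simp
    qed
    moreover have "\<forall>x\<in>topspace X. x \<in> f x"
      using N unfolding f_def open_nbhd_assignment_def by auto
    ultimately obtain fs D where fs: "cont_nbhd_refinement X f fs" "closed_discrete X D"
       "{x \<in> topspace X. fs x \<inter> D = {}} = {}"
      using H by blast
    have DX: "D \<subseteq> topspace X" using fs(2) unfolding closed_discrete_def by auto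
    have "(\<Union>d\<in>D. N d) = topspace X"
    proof
      show "(\<Union>d\<in>D. N d) \<subseteq> topspace X"
        using DX N unfolding open_nbhd_assignment_def by (auto dest: openin_subset)
      show "topspace X \<subseteq> (\<Union>d\<in>D. N d)"
      proof
        fix x assume x: "x \<in> topspace X"
        then obtain d where "d \<in> fs x" "d \<in> D" using fs(3) by blast
        then have "d \<in> f x" using fs(1) x unfolding cont_nbhd_refinement_def by auto
        then show "x \<in> (\<Union>d\<in>D. N d)" using \<open>d \<in> D\<close> unfolding f_def by auto
      qed
    qed
    then show "\<exists>D. closed_discrete X D \<and> (\<Union>d\<in>D. N d) = topspace X"
      using fs(2) by blast
  qed
qed

end
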